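(* Let $\mathscr{S}=(T,S,\sigma,\mu,\tau_T,\tau_S)$ be a relaxed scenario. Then $G_{<}(\mathscr{S})$ and $G_{>}(\mathscr{S})$ are cographs. If both $S$ and $T$ are binary trees, then $G_{=}(\mathscr{S})$ is also a cograph.
   Context: All trees are planted phylogenetic trees: a tree $T$ has a distinguished vertex $0_T$ of degree $1$ whose unique neighbor $\rho_T$ is the root, and every vertex other than $0_T$ and the leaves $L(T)$ has at least two children; it is binary if every such vertex has exactly two children. For $x,y\in V(T)$ write $y\preceq_T x$ if $x$ lies on the path from $0_T$ to $y$; edges are written $uv$ with $v\prec_T u$. $\mathrm{lca}_T$ denotes the last common ancestor. A time map for $T$ is $\tau_T\colon V(T)\to\mathbb{R}$ with $\tau_T(x)<\tau_T(y)$ whenever $x\prec_T y$. A relaxed scenario $\mathscr{S}=(T,S,\sigma,\mu,\tau_T,\tau_S)$ consists of a gene tree $T$ with time map $\tau_T$, a species tree $S$ with time map $\tau_S$, a map $\sigma\colon L(T)\to M$ with $M\subseteq L(S)$, and a map $\mu\colon V(T)\to V(S)\cup E(S)$ such that (S0) $\mu(x)=0_S$ iff $x=0_T$; (S1) $\mu(x)\in L(S)$ iff $x\in L(T)$, in which case $\mu(x)=\sigma(x)$; (S2) if $\mu(x)\in V(S)$ then $\tau_S(\mu(x))=\tau_T(x)$; (S3) if $\mu(x)=uv\in E(S)$ then $\tau_S(v)<\tau_T(x)<\tau_S(u)$. The graphs $G_{=}(\mathscr{S})$, $G_{<}(\mathscr{S})$, $G_{>}(\mathscr{S})$ have vertex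 set $L(T)$, and for distinct $x,y$ the pair $xy$ is an edge of $G_{=}(\mathscr{S})$, $G_{<}(\mathscr{S})$, resp. $G_{>}(\mathscr{S})$ iff $\tau_T(\mathrm{lca}_T(x,y))$ is $=$, $<$, resp. $>$ than $\tau_S(\mathrm{lca}_S(\sigma(x),\sigma(y)))$. A cograph is a graph with no induced path on four vertices. *)

theory Defs
  imports Main "HOL.Real"
begin

text \<open>A rooted tree is given by a vertex set V, a set E of directed edges (u,v)
  meaning v is a child of u (so v \<prec> u), and the planting vertex r0 (= 0_T).\<close>

definition children :: "('a \<times> 'a) set \<Rightarrow> 'a \<Rightarrow> 'a set" where
  "children E u = {v. (u, v) \<in> E}"

definition leaves :: "'a set \<Rightarrow> ('a \<times> 'a) set \<Rightarrow> 'a set" where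
  "leaves V E = {v \<in> V. children E v = {}}"

definition planted_tree :: "'a set \<Rightarrow> ('a \<times> 'a) set \<Rightarrow> 'a \<Rightarrow> bool" where
  "planted_tree V E r0 \<longleftrightarrow>
     finite V \<and> r0 \<in> V \<and> E \<subseteq> V \<times> V \<and>
     (\<forall>u. (u, r0) \<notin> E) \<and>
     (\<forall>v\<in>V. v \<noteq> r0 \<longrightarrow> (\<exists>!u. (u, v) \<in> E)) \<and>
     (\<forall>v\<in>V. (r0, v) \<in> E\<^sup>*) \<and>
     card (children E r0) = 1"

definition phylo_tree :: "'a set \<Rightarrow> ('a \<times> 'a) set \<Rightarrow> 'a \<Rightarrow> bool" where
  "phylo_tree V E r0 \<longleftrightarrow> planted_tree V E r0 \<and>
     (\<forall>v\<in>V. v \<noteq> r0 \<and> v \<notin> leaves V E \<longrightarrow> card (children E v) \<ge> 2)"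

definition binary_tree :: "'a set \<Rightarrow> ('a \<times> 'a) set \<Rightarrow> 'a \<Rightarrow> bool" where
  "binary_tree V E r0 \<longleftrightarrow> phylo_tree V E r0 \<and>
     (\<forall>v\<in>V. v \<noteq> r0 \<and> v \<notin> leaves V E \<longrightarrow> card (children E v) = 2)"

text \<open>y \<preceq> x  iff  (x,y) is in the reflexive transitive closure of E.  The last common ancestor is the common ancestor
  that lies below all other common ancestors.\<close>
definition lca :: "'a set \<Rightarrow> ('a \<times> 'a) set \<Rightarrow> 'a \<Rightarrow> 'a \<Rightarrow> 'a" where
  "lca V E x y = (THE z. z \<in> V \<and> (z, x) \<in> E\<^sup>* \<and> (z, y) \<in> E\<^sup>* \<and>
      (\<forall>w\<in>V. (w, x) \<in> E\<^sup>* \<and> (w, y) \<in> E\<^sup>* \<longrightarrow> (w, z) \<in> E\<^sup>*))"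

definition time_map :: "'a set \<Rightarrow> ('a \<times> 'a) set \<Rightarrow> ('a \<Rightarrow> real) \<Rightarrow> bool" where
  "time_map V E \<tau> \<longleftrightarrow> (\<forall>x\<in>V. \<forall>y\<in>V. (y, x) \<in> E\<^sup>+ \<longrightarrow> \<tau> x < \<tau> y)"

text \<open>Images of the reconciliation map: a vertex or an edge uv (v child of u).\<close>
datatype 'a vert_or_edge = Vtx 'a | Edg 'a 'a

definition relaxed_scenario ::
  "'g set \<Rightarrow> ('g \<times> 'g) set \<Rightarrow> 'g \<Rightarrow> 's set \<Rightarrow> ('s \<times> 's) set \<Rightarrow> 's \<Rightarrow>
   ('g \<Rightarrow> 's) \<Rightarrow> ('g \<Rightarrow> 's vert_or_edge) \<Rightarrow> ('g \<Rightarrow> real) \<Rightarrow> ('s \<Rightarrow> real) \<Rightarrow> bool" where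
  "relaxed_scenario VT ET r0T VS ES r0S \<sigma> \<mu> \<tau>T \<tau>S \<longleftrightarrow>
     phylo_tree VT ET r0T \<and> phylo_tree VS ES r0S \<and>
     time_map VT ET \<tau>T \<and> time_map VS ES \<tau>S \<and>
     \<sigma> ` leaves VT ET \<subseteq> leaves VS ES \<and>
     (\<forall>x\<in>VT. (\<exists>v\<in>VS. \<mu> x = Vtx v) \<or> (\<exists>u v. (u, v) \<in> ES \<and> \<mu> x = Edg u v)) \<and>
     (\<forall>x\<in>VT. \<mu> x = Vtx r0S \<longleftrightarrow> x = r0T) \<and>
     (\<forall>x\<in>VT. (\<exists>v\<in>leaves VS ES. \<mu> x = Vtx v) \<longleftrightarrow> x \<in> leaves VT ET) \<and>
     (\<forall>x\<in>leaves VT ET. \<mu> x = Vtx (\<sigma> x)) \<and>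
     (\<forall>x\<in>VT. \<forall>v. \<mu> x = Vtx v \<longrightarrow> \<tau>S v = \<tau>T x) \<and>
     (\<forall>x\<in>VT. \<forall>u v. \<mu> x = Edg u v \<longrightarrow> \<tau>S v < \<tau>T x \<and> \<tau>T x < \<tau>S u)"

definition G_rel ::
  "(real \<Rightarrow> real \<Rightarrow> bool) \<Rightarrow> 'g set \<Rightarrow> ('g \<times> 'g) set \<Rightarrow> 's set \<Rightarrow> ('s \<times> 's) set \<Rightarrow>
   ('g \<Rightarrow> 's) \<Rightarrow> ('g \<Rightarrow> real) \<Rightarrow> ('s \<Rightarrow> real) \<Rightarrow> 'g \<Rightarrow> 'g \<Rightarrow> bool" where
  "G_rel R VT ET VS ES \<sigma> \<tau>T \<tau>S x y \<longleftrightarrow>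
     x \<noteq> y \<and> R (\<tau>T (lca VT ET x y)) (\<tau>S (lca VS ES (\<sigma> x) (\<sigma> y)))"

definition cograph :: "'a set \<Rightarrow> ('a \<Rightarrow> 'a \<Rightarrow> bool) \<Rightarrow> bool" where
  "cograph V adj \<longleftrightarrow> \<not> (\<exists>a\<in>V. \<exists>b\<in>V. \<exists>c\<in>V. \<exists>d\<in>V.
     distinct [a, b, c, d] \<and> adj a b \<and> adj b c \<and> adj c d \<and>
     \<not> adj a c \<and> \<not> adj b d \<and> \<not> adj a d)"

end

theory Submission
  imports Defs
begin
lemma pt_D:
  assumes "planted_tree V E r0"
  shows "finite V" "r0 \<in> V" "E \<subseteq> V \<times> V" "\<And>u. (u, r0) \<notin> E"
    "\<And>v. v \<in> V \<Longrightarrow> v \<noteq> r0 \<Longrightarrow> \<exists>!u. (u, v) \<in> E"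
    "\<And>v. v \<in> V \<Longrightarrow> (r0, v) \<in> E\<^sup>*" "card (children E r0) = 1"
  using assms unfolding planted_tree_def by (elim conjE; blast)+

lemma pt_sub: "planted_tree V E r0 \<Longrightarrow> E \<subseteq> V \<times> V"
  by (rule pt_D(3))
lemma pt_noparent: "planted_tree V E r0 \<Longrightarrow> (u, r0) \<notin> E"
  by (rule pt_D(4))
lemma pt_reach: "planted_tree V E r0 \<Longrightarrow> v \<in> V \<Longrightarrow> (r0, v) \<in> E\<^sup>*"
  by (rule pt_D(6))

lemma pt_par_unique:
  assumes "planted_tree V E r0" "(u, v) \<in> E" "(w, v) \<in> E" shows "u = w"
proof -
  have "v \<in> V" using assms(2) pt_sub[OF assms(1)] by blast
  moreover have "v \<noteq> r0" using assms(2) pt_noparent[OF assms(1)] by blast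
  ultimately have "\<exists>!u. (u, v) \<in> E" by (rule pt_D(5)[OF assms(1)])
  then show ?thesis using assms(2,3) by blast
qed

lemma pt_chain:
  assumes "planted_tree V E r0" "(a, v) \<in> E\<^sup>*"
  shows "(b, v) \<in> E\<^sup>* \<Longrightarrow> (a, b) \<in> E\<^sup>* \<or> (b, a) \<in> E\<^sup>*"
  using assms(2)
proof (induction arbitrary: b rule: rtrancl_induct)
  case base
  then show ?case by blast
next
  case (step w v)
  show ?case
  proof (cases "b = v")
    case True
    then show ?thesis using step by (meson rtrancl.rtrancl_into_rtrancl)
  next
    case False
    then obtain w' where "(b, w') \<in> E\<^sup>*" "(w', v) \<in> E"
      using step.prems by (metis rtranclE)
    then have "w' = w" using pt_par_unique[OF assms(1)] step by blast
    then show ?thesis using step.IH \<open>(b, w') \<in> E\<^sup>*\<close> by blast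
  qed
qed

lemma pt_noQ:
  assumes "planted_tree V E r0" "(r0, v) \<in> E\<^sup>*"
  shows "(u, v) \<in> E\<^sup>+ \<Longrightarrow> (v, u) \<in> E\<^sup>* \<Longrightarrow> False"
  using assms(2)
proof (induction arbitrary: u rule: rtrancl_induct)
  case base
  then show ?case using pt_noparent[OF assms(1)] by (metis tranclE)
next
  case (step w v)
  obtain w' where "(u, w') \<in> E\<^sup>*" "(w', v) \<in> E" using step.prems(1) by (metis tranclD2)
  then have "w' = w" using pt_par_unique[OF assms(1)] step by blast
  have "(w, w) \<in> E\<^sup>+"
    using step.hyps(2) step.prems(2) \<open>(u, w') \<in> E\<^sup>*\<close> \<open>w' = w\<close>
    by (meson rtrancl_trans rtrancl_into_trancl2)
  then show ?case using step.IH by blast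
qed

lemma pt_acyc:
  assumes "planted_tree V E r0" "(x, x) \<in> E\<^sup>+" shows False
proof -
  have "x \<in> V" using assms trancl_subset_Sigma[OF pt_sub[OF assms(1)]] by blast
  then show False using pt_noQ[OF assms(1) pt_reach[OF assms(1)]] assms(2) by blast
qed

lemma pt_antisym:
  assumes "planted_tree V E r0" "(x, y) \<in> E\<^sup>*" "(y, x) \<in> E\<^sup>*" shows "x = y"
proof (rule ccontr)
  assume "x \<noteq> y"
  then have "(x, y) \<in> E\<^sup>+" using assms(2) by (simp add: rtrancl_eq_or_trancl)
  then have "(x, x) \<in> E\<^sup>+" using assms(3) by (meson trancl_rtrancl_trancl)
  then show False using pt_acyc[OF assms(1)] by blast
qed

lemma pt_anc_in_V:
  assumes "planted_tree V E r0" "(w, x) \<in> E\<^sup>*" "x \<in> V" shows "w \<in> V"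
proof (cases "w = x")
  case False
  then have "(w, x) \<in> E\<^sup>+" using assms(2) by (simp add: rtrancl_eq_or_trancl)
  then show ?thesis using trancl_subset_Sigma[OF pt_sub[OF assms(1)]] by blast
qed (use assms in auto)

definition is_lca where
  "is_lca V E x y z \<longleftrightarrow> z \<in> V \<and> (z, x) \<in> E\<^sup>* \<and> (z, y) \<in> E\<^sup>* \<and>
      (\<forall>w\<in>V. (w, x) \<in> E\<^sup>* \<and> (w, y) \<in> E\<^sup>* \<longrightarrow> (w, z) \<in> E\<^sup>*)"

lemma pt_lca_ex:
  assumes "planted_tree V E r0" "x \<in> V" "y \<in> V"
  shows "\<exists>z. is_lca V E x y z"
proof -
  have fin: "finite E" using pt_D(1,3)[OF assms(1)]
    by (meson finite_SigmaI finite_subset)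
  have "acyclic E" unfolding acyclic_def using pt_acyc[OF assms(1)] by blast
  then have "acyclic (E\<inverse>)" by (simp only: acyclic_converse)
  then have wfE: "wf (E\<inverse>)" using fin by (simp add: wf_iff_acyclic_if_finite)
  define Q where "Q = {z\<in>V. (z, x) \<in> E\<^sup>* \<and> (z, y) \<in> E\<^sup>*}"
  have "r0 \<in> Q" unfolding Q_def
    using pt_reach[OF assms(1) assms(2)] pt_reach[OF assms(1) assms(3)] pt_D(2)[OF assms(1)] by blast
  then obtain z where zQ: "z \<in> Q" and zmin: "\<And>c. (c, z) \<in> E\<inverse> \<Longrightarrow> c \<notin> Q"
    using wfE_min[OF wfE] by metis
  have zV: "z \<in> V" and zx: "(z, x) \<in> E\<^sup>*" and zy: "(z, y) \<in> E\<^sup>*" using zQ unfolding Q_def by blast+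
  have H: "(w, z) \<in> E\<^sup>*" if wV: "w \<in> V" and wx: "(w, x) \<in> E\<^sup>*" and wy: "(w, y) \<in> E\<^sup>*" for w
  proof -
    have ch: "(w, z) \<in> E\<^sup>* \<or> (z, w) \<in> E\<^sup>*"
      using pt_chain[OF assms(1) wx zx] by blast
    have "\<not> ((z, w) \<in> E\<^sup>* \<and> z \<noteq> w)"
    proof
      assume zw: "(z, w) \<in> E\<^sup>* \<and> z \<noteq> w"
      then obtain c where zc: "(z, c) \<in> E" and cw: "(c, w) \<in> E\<^sup>*"
        by (metis converse_rtranclE)
      have cV: "c \<in> V" using zc pt_sub[OF assms(1)] by blast
      have "(c, x) \<in> E\<^sup>*" using cw wx by (rule rtrancl_trans)
      moreover have "(c, y) \<in> E\<^sup>*" using cw wy by (rule rtrancl_trans)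
      ultimately have "c \<in> Q" unfolding Q_def using cV by blast
      moreover have "(c, z) \<in> E\<inverse>" using zc by simp
      ultimately show False using zmin by blast
    qed
    then show ?thesis using ch by blast
  qed
  have "is_lca V E x y z" unfolding is_lca_def using zV zx zy H by blast
  then show ?thesis by blast
qed

lemma pt_lca_unique:
  assumes "planted_tree V E r0" "is_lca V E x y z" "is_lca V E x y z'" shows "z = z'"
proof -
  have "(z', z) \<in> E\<^sup>*" using assms(2,3) unfolding is_lca_def by blast
  moreover have "(z, z') \<in> E\<^sup>*" using assms(2,3) unfolding is_lca_def by blast
  ultimately show ?thesis using pt_antisym[OF assms(1)] by blast
qed

lemma lca_alt: "lca V E x y = (THE z. is_lca V E x y z)"
  by (simp add: lca_def is_lca_def)

lemma pt_lca:
  assumes "planted_tree V E r0" "x \<in> V" "y \<in> V"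
  shows "is_lca V E x y (lca V E x y)"
proof -
  obtain z where z: "is_lca V E x y z" using pt_lca_ex[OF assms] by blast
  have "(THE z. is_lca V E x y z) = z"
  proof (rule the_equality)
    show "is_lca V E x y z" by (rule z)
    show "\<And>z'. is_lca V E x y z' \<Longrightarrow> z' = z" using pt_lca_unique[OF assms(1) _ z] by metis
  qed
  then show ?thesis using z by (simp add: lca_alt)
qed

lemma pt_lca_eqI:
  assumes "planted_tree V E r0" "x \<in> V" "y \<in> V" "is_lca V E x y z"
  shows "lca V E x y = z"
  using pt_lca_unique[OF assms(1) pt_lca[OF assms(1-3)] assms(4)] .

lemma pt_lca_same:
  assumes "planted_tree V E r0" "x \<in> V" shows "lca V E x x = x"
proof -
  have "is_lca V E x x x" unfolding is_lca_def using assms(2) by blast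
  then show ?thesis using pt_lca_eqI[OF assms assms(2)] by blast
qed

lemma pt_three:
  assumes "planted_tree V E r0" "x \<in> V" "y \<in> V" "z \<in> V"
  defines "a \<equiv> lca V E x y" and "b \<equiv> lca V E x z" and "c \<equiv> lca V E y z"
  shows "(a = b \<and> (a, c) \<in> E\<^sup>*) \<or> (a = c \<and> (a, b) \<in> E\<^sup>*) \<or> (b = c \<and> (b, a) \<in> E\<^sup>*)"
proof -
  have A: "is_lca V E x y a" using pt_lca[OF assms(1,2,3)] a_def by simp
  have B: "is_lca V E x z b" using pt_lca[OF assms(1,2,4)] b_def by simp
  have C: "is_lca V E y z c" using pt_lca[OF assms(1,3,4)] c_def by simp
  note as = pt_antisym[OF assms(1)]
  have Va: "a \<in> V" and ax: "(a, x) \<in> E\<^sup>*" and ay: "(a, y) \<in> E\<^sup>*"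
    and Ag: "\<And>w. w \<in> V \<Longrightarrow> (w, x) \<in> E\<^sup>* \<Longrightarrow> (w, y) \<in> E\<^sup>* \<Longrightarrow> (w, a) \<in> E\<^sup>*"
    using A unfolding is_lca_def by blast+
  have Vb: "b \<in> V" and bx: "(b, x) \<in> E\<^sup>*" and bz: "(b, z) \<in> E\<^sup>*"
    and Bg: "\<And>w. w \<in> V \<Longrightarrow> (w, x) \<in> E\<^sup>* \<Longrightarrow> (w, z) \<in> E\<^sup>* \<Longrightarrow> (w, b) \<in> E\<^sup>*"
    using B unfolding is_lca_def by blast+
  have Vc: "c \<in> V" and cy: "(c, y) \<in> E\<^sup>*" and cz: "(c, z) \<in> E\<^sup>*"
    and Cg: "\<And>w. w \<in> V \<Longrightarrow> (w, y) \<in> E\<^sup>* \<Longrightarrow> (w, z) \<in> E\<^sup>* \<Longrightarrow> (w, c) \<in> E\<^sup>*"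
    using C unfolding is_lca_def by blast+
  have ab: "(a, b) \<in> E\<^sup>* \<or> (b, a) \<in> E\<^sup>*" using pt_chain[OF assms(1) ax bx] .
  have cb: "(c, b) \<in> E\<^sup>* \<or> (b, c) \<in> E\<^sup>*" using pt_chain[OF assms(1) cz bz] .
  have ca: "(c, a) \<in> E\<^sup>* \<or> (a, c) \<in> E\<^sup>*" using pt_chain[OF assms(1) cy ay] .
  show ?thesis
  proof (cases "(a, b) \<in> E\<^sup>*")
    case True
    then have "(a, z) \<in> E\<^sup>*" using bz by (rule rtrancl_trans)
    then have ac: "(a, c) \<in> E\<^sup>*" using Cg[OF Va ay] by blast
    from cb show ?thesis
    proof
      assume "(c, b) \<in> E\<^sup>*"
      then have "(c, x) \<in> E\<^sup>*" using bx by (rule rtrancl_trans)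
      then have "(c, a) \<in> E\<^sup>*" using Ag[OF Vc _ cy] by blast
      then have "a = c" using as ac by blast
      then show ?thesis using True by blast
    next
      assume "(b, c) \<in> E\<^sup>*"
      then have "(b, y) \<in> E\<^sup>*" using cy by (rule rtrancl_trans)
      then have "(b, a) \<in> E\<^sup>*" using Ag[OF Vb bx] by blast
      then have "a = b" using as True by blast
      then show ?thesis using ac by blast
    qed
  next
    case False
    then have ba: "(b, a) \<in> E\<^sup>*" using ab by blast
    then have "(b, y) \<in> E\<^sup>*" using ay by (rule rtrancl_trans)
    then have bc: "(b, c) \<in> E\<^sup>*" using Cg[OF Vb _ bz] by blast
    from ca show ?thesis
    proof
      assume "(c, a) \<in> E\<^sup>*"
      then have "(c, x) \<in> E\<^sup>*" using ax by (rule rtrancl_trans)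
      then have "(c, b) \<in> E\<^sup>*" using Bg[OF Vc _ cz] by blast
      then have "b = c" using as bc by blast
      then show ?thesis using ba by blast
    next
      assume "(a, c) \<in> E\<^sup>*"
      then have "(a, z) \<in> E\<^sup>*" using cz by (rule rtrancl_trans)
      then have "(a, b) \<in> E\<^sup>*" using Bg[OF Va ax] by blast
      then show ?thesis using False by blast
    qed
  qed
qed

lemma leaf_anc:
  assumes "x \<in> leaves V E" "(x, y) \<in> E\<^sup>*" shows "y = x"
  using assms unfolding leaves_def children_def
  by (metis (mono_tags, lifting) converse_rtranclE empty_Collect_eq mem_Collect_eq)


lemma leaf_V: "x \<in> leaves V E \<Longrightarrow> x \<in> V"
  unfolding leaves_def by blast

lemma pt_no_back:
  assumes "planted_tree V E r0" "(v, c) \<in> E" "(c, v) \<in> E\<^sup>*" shows False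
proof -
  have "(v, v) \<in> E\<^sup>+" using assms(2,3) by (rule rtrancl_into_trancl2)
  then show False using pt_acyc[OF assms(1)] by blast
qed

lemma tm_le:
  assumes "time_map V E \<tau>" "u \<in> V" "v \<in> V" "(u, v) \<in> E\<^sup>*"
  shows "\<tau> v \<le> \<tau> u"
proof (cases "u = v")
  case False
  then have "(u, v) \<in> E\<^sup>+" using assms(4) by (simp add: rtrancl_eq_or_trancl)
  then show ?thesis using assms(1-3) unfolding time_map_def by (meson less_imp_le)
qed simp

lemma tm_lt:
  assumes "time_map V E \<tau>" "u \<in> V" "v \<in> V" "(u, v) \<in> E\<^sup>*" "u \<noteq> v"
  shows "\<tau> v < \<tau> u"
proof -
  have "(u, v) \<in> E\<^sup>+" using assms(4,5) by (simp add: rtrancl_eq_or_trancl)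
  then show ?thesis using assms(1-3) unfolding time_map_def by blast
qed

definition tp3 :: "real \<Rightarrow> real \<Rightarrow> real \<Rightarrow> bool" where
 "tp3 p q r \<longleftrightarrow> (p = q \<and> r \<le> p) \<or> (p = r \<and> q \<le> p) \<or> (q = r \<and> p \<le> q)"
definition tp3s :: "real \<Rightarrow> real \<Rightarrow> real \<Rightarrow> bool" where
 "tp3s p q r \<longleftrightarrow> (p = q \<and> r < p) \<or> (p = r \<and> q < p) \<or> (q = r \<and> p < q)"

lemma tp3_gen:
  assumes "planted_tree V E r0" "time_map V E \<tau>" "x \<in> V" "y \<in> V" "z \<in> V"
  shows "tp3 (\<tau> (lca V E x y)) (\<tau> (lca V E x z)) (\<tau> (lca V E y z))"
proof -
  have Va: "lca V E x y \<in> V" using pt_lca[OF assms(1,3,4)] unfolding is_lca_def by blast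
  have Vb: "lca V E x z \<in> V" using pt_lca[OF assms(1,3,5)] unfolding is_lca_def by blast
  have Vc: "lca V E y z \<in> V" using pt_lca[OF assms(1,4,5)] unfolding is_lca_def by blast
  note th = pt_three[OF assms(1,3,4,5)]
  note le = tm_le[OF assms(2)]
  show ?thesis unfolding tp3_def using th le[OF Va Vc] le[OF Va Vb] le[OF Vb Va] by auto
qed

lemma tp3s_gen:
  assumes "planted_tree V E r0" "time_map V E \<tau>" "x \<in> V" "y \<in> V" "z \<in> V"
    and ne: "\<not> (lca V E x y = lca V E x z \<and> lca V E x z = lca V E y z)"
  shows "tp3s (\<tau> (lca V E x y)) (\<tau> (lca V E x z)) (\<tau> (lca V E y z))"
proof -
  have Va: "lca V E x y \<in> V" using pt_lca[OF assms(1,3,4)] unfolding is_lca_def by blast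
  have Vb: "lca V E x z \<in> V" using pt_lca[OF assms(1,3,5)] unfolding is_lca_def by blast
  have Vc: "lca V E y z \<in> V" using pt_lca[OF assms(1,4,5)] unfolding is_lca_def by blast
  note th = pt_three[OF assms(1,3,4,5)]
  note lt = tm_lt[OF assms(2)]
  show ?thesis
  proof -
    consider "lca V E x y = lca V E x z \<and> (lca V E x y, lca V E y z) \<in> E\<^sup>*"
      | "lca V E x y = lca V E y z \<and> (lca V E x y, lca V E x z) \<in> E\<^sup>*"
      | "lca V E x z = lca V E y z \<and> (lca V E x z, lca V E x y) \<in> E\<^sup>*"
      using th by blast
    then show ?thesis
    proof cases
      case 1
      then have "lca V E x y \<noteq> lca V E y z" using ne by metis
      then show ?thesis unfolding tp3s_def using 1 lt[OF Va Vc] by auto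
    next
      case 2
      then have "lca V E x y \<noteq> lca V E x z" using ne by metis
      then show ?thesis unfolding tp3s_def using 2 lt[OF Va Vb] by auto
    next
      case 3
      then have "lca V E x z \<noteq> lca V E x y" using ne by metis
      then show ?thesis unfolding tp3s_def using 3 lt[OF Vb Va] by auto
    qed
  qed
qed

lemma lca_leaf_eq:
  assumes "planted_tree V E r0" "p \<in> leaves V E" "r \<in> V" "lca V E p r = p" shows "r = p"
proof -
  have "(lca V E p r, r) \<in> E\<^sup>*" using pt_lca[OF assms(1) leaf_V[OF assms(2)] assms(3)]
    unfolding is_lca_def by blast
  then show ?thesis using assms(4) leaf_anc[OF assms(2)] by simp
qed

lemma lca_leaf_eq2:
  assumes "planted_tree V E r0" "p \<in> leaves V E" "r \<in> V" "lca V E r p = p" shows "r = p"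
proof -
  have "(lca V E r p, r) \<in> E\<^sup>*" using pt_lca[OF assms(1) assms(3) leaf_V[OF assms(2)]]
    unfolding is_lca_def by blast
  then show ?thesis using assms(4) leaf_anc[OF assms(2)] by simp
qed

lemma is_lcaD:
  assumes "is_lca V E x y z"
  shows "z \<in> V" "(z, x) \<in> E\<^sup>*" "(z, y) \<in> E\<^sup>*"
    "\<And>w. w \<in> V \<Longrightarrow> (w, x) \<in> E\<^sup>* \<Longrightarrow> (w, y) \<in> E\<^sup>* \<Longrightarrow> (w, z) \<in> E\<^sup>*"
  using assms unfolding is_lca_def by blast+

lemma bin_noteq3:
  assumes pt: "planted_tree V E r0"
    and bin: "\<forall>v\<in>V. v \<noteq> r0 \<and> v \<notin> leaves V E \<longrightarrow> card (children E v) = 2"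
    and p: "p \<in> leaves V E" and q: "q \<in> leaves V E" and r: "r \<in> leaves V E"
    and d: "p \<noteq> q" "p \<noteq> r" "q \<noteq> r"
  shows "\<not> (lca V E p q = lca V E p r \<and> lca V E p r = lca V E q r)"
proof
  assume eq: "lca V E p q = lca V E p r \<and> lca V E p r = lca V E q r"
  define v where "v = lca V E p q"
  have pV: "p \<in> V" and qV: "q \<in> V" and rV: "r \<in> V" using leaf_V[OF p] leaf_V[OF q] leaf_V[OF r] by this
  have e1: "lca V E p r = v" unfolding v_def using conjunct1[OF eq] by (rule sym)
  have e2: "lca V E q r = v" using trans[OF sym[OF conjunct2[OF eq]] e1] .
  have A: "is_lca V E p q v" unfolding v_def by (rule pt_lca[OF pt pV qV])
  have B: "is_lca V E p r v" using pt_lca[OF pt pV rV] by (simp only: e1)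
  have C: "is_lca V E q r v" using pt_lca[OF pt qV rV] by (simp only: e2)
  have vp: "(v, p) \<in> E\<^sup>*" and vq: "(v, q) \<in> E\<^sup>*" and vr: "(v, r) \<in> E\<^sup>*" and vV: "v \<in> V"
    using is_lcaD[OF A] is_lcaD[OF B] by blast+
  have "v \<noteq> p" proof assume "v = p" then have "(p, q) \<in> E\<^sup>*" using vq by simp then have "q = p" by (rule leaf_anc[OF p]) then show False using d(1) by simp qed
  then obtain cp where vcp: "(v, cp) \<in> E" and cpp: "(cp, p) \<in> E\<^sup>*" using vp by (metis converse_rtranclE)
  have "v \<noteq> q" proof assume "v = q" then have "(q, p) \<in> E\<^sup>*" using vp by simp then have "p = q" by (rule leaf_anc[OF q]) then show False using d(1) by simp qed
  then obtain cq where vcq: "(v, cq) \<in> E" and cqq: "(cq, q) \<in> E\<^sup>*" using vq by (metis converse_rtranclE)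
  have "v \<noteq> r" proof assume "v = r" then have "(r, p) \<in> E\<^sup>*" using vp by simp then have "p = r" by (rule leaf_anc[OF r]) then show False using d(2) by simp qed
  then obtain cr where vcr: "(v, cr) \<in> E" and crr: "(cr, r) \<in> E\<^sup>*" using vr by (metis converse_rtranclE)
  have cpV: "cp \<in> V" and cqV: "cq \<in> V" and crV: "cr \<in> V" using vcp vcq vcr pt_sub[OF pt] by blast+
  have sub: "{cp, cq, cr} \<subseteq> children E v" using vcp vcq vcr unfolding children_def by blast
  have "children E v \<subseteq> V" using pt_sub[OF pt] unfolding children_def by blast
  then have fin: "finite (children E v)" using pt_D(1)[OF pt] by (rule finite_subset)
  have card2: "card (children E v) \<le> 2"
  proof (cases "v = r0")
    case True
    then show ?thesis using pt_D(7)[OF pt] by simp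
  next
    case False
    have "v \<notin> leaves V E" using sub unfolding leaves_def by blast
    then show ?thesis using bin vV False by simp
  qed
  show False
  proof (cases "cp = cq \<or> cp = cr \<or> cq = cr")
    case True
    then show ?thesis
    proof (elim disjE)
      assume h: "cp = cq"
      have "(cp, q) \<in> E\<^sup>*" using cqq by (simp only: h)
      then have "(cp, v) \<in> E\<^sup>*" by (rule is_lcaD(4)[OF A cpV cpp])
      then show False using pt_no_back[OF pt vcp] by blast
    next
      assume h: "cp = cr"
      have "(cp, r) \<in> E\<^sup>*" using crr by (simp only: h)
      then have "(cp, v) \<in> E\<^sup>*" by (rule is_lcaD(4)[OF B cpV cpp])
      then show False using pt_no_back[OF pt vcp] by blast
    next
      assume h: "cq = cr"
      have "(cq, r) \<in> E\<^sup>*" using crr by (simp only: h)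
      then have "(cq, v) \<in> E\<^sup>*" by (rule is_lcaD(4)[OF C cqV cqq])
      then show False using pt_no_back[OF pt vcq] by blast
    qed
  next
    case False
    then have "card {cp, cq, cr} = 3" by simp
    moreover have "card {cp, cq, cr} \<le> card (children E v)" using card_mono[OF fin sub] .
    ultimately show False using card2 by simp
  qed
qed

lemma bin_noteq3':
  assumes pt: "planted_tree V E r0"
    and bin: "\<forall>v\<in>V. v \<noteq> r0 \<and> v \<notin> leaves V E \<longrightarrow> card (children E v) = 2"
    and p: "p \<in> leaves V E" and q: "q \<in> leaves V E" and r: "r \<in> leaves V E"
    and d: "\<not> (p = q \<and> q = r)"
  shows "\<not> (lca V E p q = lca V E p r \<and> lca V E p r = lca V E q r)"
proof -
  have pV: "p \<in> V" and qV: "q \<in> V" and rV: "r \<in> V" using leaf_V[OF p] leaf_V[OF q] leaf_V[OF r] by this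
  consider "p \<noteq> q \<and> p \<noteq> r \<and> q \<noteq> r" | "p = q" "q \<noteq> r" | "p = r" "q \<noteq> r" | "q = r" "p \<noteq> q"
    using d by blast
  then show ?thesis
  proof cases
    case 1 then show ?thesis using bin_noteq3[OF pt bin p q r] by blast
  next
    case 2
    then have "lca V E p q = p" using pt_lca_same[OF pt pV] by simp
    then show ?thesis using lca_leaf_eq[OF pt p rV] 2 by metis
  next
    case 3
    then have "lca V E p r = p" using pt_lca_same[OF pt pV] by simp
    then show ?thesis using lca_leaf_eq[OF pt p qV] 3 by metis
  next
    case 4
    then have "lca V E q r = q" using pt_lca_same[OF pt qV] by simp
    then show ?thesis using lca_leaf_eq2[OF pt q pV] 4 by metis
  qed
qed


lemma lt_case:
  fixes tab tac tad tbc tbd tcd sab sac sad sbc sbd scd :: real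
  assumes "tp3 tab tac tbc" "tp3 tab tad tbd" "tp3 tac tad tcd" "tp3 tbc tbd tcd"
   "tp3 sab sac sbc" "tp3 sab sad sbd" "tp3 sac sad scd" "tp3 sbc sbd scd"
   "tab < sab" "tbc < sbc" "tcd < scd" "\<not> tac < sac" "\<not> tbd < sbd" "\<not> tad < sad"
  shows False
  using assms unfolding tp3_def by smt

lemma gt_case:
  fixes tab tac tad tbc tbd tcd sab sac sad sbc sbd scd :: real
  assumes "tp3 tab tac tbc" "tp3 tab tad tbd" "tp3 tac tad tcd" "tp3 tbc tbd tcd"
   "tp3 sab sac sbc" "tp3 sab sad sbd" "tp3 sac sad scd" "tp3 sbc sbd scd"
   "tab > sab" "tbc > sbc" "tcd > scd" "\<not> tac > sac" "\<not> tbd > sbd" "\<not> tad > sad"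
  shows False
  using assms unfolding tp3_def by smt

lemma eq_case:
  fixes tab tac tad tbc tbd tcd sab sac sad sbc sbd scd :: real
  assumes "tp3s tab tac tbc" "tp3s tab tad tbd" "tp3s tac tad tcd" "tp3s tbc tbd tcd"
   "tp3s sab sac sbc \<or> (tab \<noteq> sab \<and> tac \<noteq> sac \<and> tbc \<noteq> sbc)"
   "tp3s sab sad sbd \<or> (tab \<noteq> sab \<and> tad \<noteq> sad \<and> tbd \<noteq> sbd)"
   "tp3s sac sad scd \<or> (tac \<noteq> sac \<and> tad \<noteq> sad \<and> tcd \<noteq> scd)"
   "tp3s sbc sbd scd \<or> (tbc \<noteq> sbc \<and> tbd \<noteq> sbd \<and> tcd \<noteq> scd)"
   "tab = sab" "tbc = sbc" "tcd = scd" "tac \<noteq> sac" "tbd \<noteq> sbd" "tad \<noteq> sad"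
  shows False
  using assms unfolding tp3s_def by smt

lemma cograph_from:
  assumes "\<And>a b c d. a \<in> L \<Longrightarrow> b \<in> L \<Longrightarrow> c \<in> L \<Longrightarrow> d \<in> L \<Longrightarrow> distinct [a, b, c, d] \<Longrightarrow>
     R (t a b) (s a b) \<Longrightarrow> R (t b c) (s b c) \<Longrightarrow> R (t c d) (s c d) \<Longrightarrow>
     \<not> R (t a c) (s a c) \<Longrightarrow> \<not> R (t b d) (s b d) \<Longrightarrow> \<not> R (t a d) (s a d) \<Longrightarrow> False"
  shows "cograph L (\<lambda>x y. x \<noteq> y \<and> R (t x y) (s x y))"
  unfolding cograph_def
  apply (intro notI, elim bexE conjE)
  subgoal for a b c d using assms[of a b c d] by auto
  done

lemma G_rel_eq:
  "G_rel R VT ET VS ES \<sigma> \<tau>T \<tau>S = (\<lambda>x y. x \<noteq> y \<and> R (\<tau>T (lca VT ET x y)) (\<tau>S (lca VS ES (\<sigma> x) (\<sigma> y))))"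
  by (intro ext) (simp only: G_rel_def)

theorem theorem1:
  fixes VT :: "'g set" and ET :: "('g \<times> 'g) set" and r0T :: 'g
    and VS :: "'s set" and ES :: "('s \<times> 's) set" and r0S :: 's
    and \<sigma> :: "'g \<Rightarrow> 's" and \<mu> :: "'g \<Rightarrow> 's vert_or_edge"
    and \<tau>T :: "'g \<Rightarrow> real" and \<tau>S :: "'s \<Rightarrow> real"
  assumes "relaxed_scenario VT ET r0T VS ES r0S \<sigma> \<mu> \<tau>T \<tau>S"
  shows "cograph (leaves VT ET) (G_rel (<) VT ET VS ES \<sigma> \<tau>T \<tau>S) \<and>
         cograph (leaves VT ET) (G_rel (>) VT ET VS ES \<sigma> \<tau>T \<tau>S) \<and>
         (binary_tree VT ET r0T \<and> binary_tree VS ES r0S \<longrightarrow>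
           cograph (leaves VT ET) (G_rel (=) VT ET VS ES \<sigma> \<tau>T \<tau>S))"
proof -
  note rs = assms[unfolded relaxed_scenario_def]
  have ptT: "planted_tree VT ET r0T" using rs unfolding phylo_tree_def by (elim conjE)
  have ptS: "planted_tree VS ES r0S" using rs unfolding phylo_tree_def by (elim conjE)
  have tmT: "time_map VT ET \<tau>T" using rs by (elim conjE)
  have tmS: "time_map VS ES \<tau>S" using rs by (elim conjE)
  have sig: "\<sigma> ` leaves VT ET \<subseteq> leaves VS ES" using rs by (elim conjE)
  have muL: "\<forall>x\<in>leaves VT ET. \<mu> x = Vtx (\<sigma> x)" using rs by (elim conjE)
  have muT: "\<forall>x\<in>VT. \<forall>v. \<mu> x = Vtx v \<longrightarrow> \<tau>S v = \<tau>T x" using rs by (elim conjE)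
  define L where "L = leaves VT ET"
  define t where "t = (\<lambda>x y. \<tau>T (lca VT ET x y))"
  define s where "s = (\<lambda>x y. \<tau>S (lca VS ES (\<sigma> x) (\<sigma> y)))"
  have G: "\<And>R. G_rel R VT ET VS ES \<sigma> \<tau>T \<tau>S = (\<lambda>x y. x \<noteq> y \<and> R (t x y) (s x y))"
    unfolding t_def s_def by (rule G_rel_eq)
  have LV: "x \<in> VT" if "x \<in> L" for x using leaf_V that unfolding L_def by metis
  have LS: "\<sigma> x \<in> leaves VS ES" if "x \<in> L" for x using sig that unfolding L_def by blast
  have LSV: "\<sigma> x \<in> VS" if "x \<in> L" for x using leaf_V[OF LS[OF that]] .
  have tp3T: "tp3 (t x y) (t x z) (t y z)" if "x \<in> L" "y \<in> L" "z \<in> L" for x y z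
    unfolding t_def by (rule tp3_gen[OF ptT tmT LV[OF that(1)] LV[OF that(2)] LV[OF that(3)]])
  have tp3S: "tp3 (s x y) (s x z) (s y z)" if "x \<in> L" "y \<in> L" "z \<in> L" for x y z
    unfolding s_def by (rule tp3_gen[OF ptS tmS LSV[OF that(1)] LSV[OF that(2)] LSV[OF that(3)]])
  have C1: "cograph L (G_rel (<) VT ET VS ES \<sigma> \<tau>T \<tau>S)"
    unfolding G
  proof (rule cograph_from)
    fix a b c d assume H: "a \<in> L" "b \<in> L" "c \<in> L" "d \<in> L"
      "t a b < s a b" "t b c < s b c" "t c d < s c d" "\<not> t a c < s a c" "\<not> t b d < s b d" "\<not> t a d < s a d"
    show False
      using lt_case[OF tp3T[OF H(1,2,3)] tp3T[OF H(1,2,4)] tp3T[OF H(1,3,4)] tp3T[OF H(2,3,4)]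
         tp3S[OF H(1,2,3)] tp3S[OF H(1,2,4)] tp3S[OF H(1,3,4)] tp3S[OF H(2,3,4)] H(5-10)] .
  qed
  have C2: "cograph L (G_rel (>) VT ET VS ES \<sigma> \<tau>T \<tau>S)"
    unfolding G
  proof (rule cograph_from)
    fix a b c d assume H: "a \<in> L" "b \<in> L" "c \<in> L" "d \<in> L"
      "t a b > s a b" "t b c > s b c" "t c d > s c d" "\<not> t a c > s a c" "\<not> t b d > s b d" "\<not> t a d > s a d"
    show False
      using gt_case[OF tp3T[OF H(1,2,3)] tp3T[OF H(1,2,4)] tp3T[OF H(1,3,4)] tp3T[OF H(2,3,4)]
         tp3S[OF H(1,2,3)] tp3S[OF H(1,2,4)] tp3S[OF H(1,3,4)] tp3S[OF H(2,3,4)] H(5-10)] .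
  qed
  have C3: "cograph L (G_rel (=) VT ET VS ES \<sigma> \<tau>T \<tau>S)"
    if bT: "binary_tree VT ET r0T" and bS: "binary_tree VS ES r0S"
  proof -
    have binT: "\<forall>v\<in>VT. v \<noteq> r0T \<and> v \<notin> leaves VT ET \<longrightarrow> card (children ET v) = 2"
      using bT unfolding binary_tree_def by (elim conjE)
    have binS: "\<forall>v\<in>VS. v \<noteq> r0S \<and> v \<notin> leaves VS ES \<longrightarrow> card (children ES v) = 2"
      using bS unfolding binary_tree_def by (elim conjE)
    have tp3sT: "tp3s (t x y) (t x z) (t y z)"
      if "x \<in> L" "y \<in> L" "z \<in> L" "x \<noteq> y" "x \<noteq> z" "y \<noteq> z" for x y z
    proof -
      have "\<not> (lca VT ET x y = lca VT ET x z \<and> lca VT ET x z = lca VT ET y z)"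
        using bin_noteq3[OF ptT binT that(1-3)[unfolded L_def] that(4-6)] .
      then show ?thesis
        unfolding t_def by (rule tp3s_gen[OF ptT tmT LV[OF that(1)] LV[OF that(2)] LV[OF that(3)]])
    qed
    have same: "t x y \<noteq> s x y" if "x \<in> L" "y \<in> L" "x \<noteq> y" "\<sigma> x = \<sigma> y" for x y
    proof -
      have xV: "x \<in> VT" and yV: "y \<in> VT" using LV that by blast+
      have "s x y = \<tau>S (\<sigma> x)" unfolding s_def using that(4) pt_lca_same[OF ptS LSV[OF that(1)]] by simp
      also have "\<dots> = \<tau>T x" using muT muL xV that(1) unfolding L_def by blast
      finally have sx: "s x y = \<tau>T x" .
      have il: "is_lca VT ET x y (lca VT ET x y)" by (rule pt_lca[OF ptT xV yV])
      have lx: "(lca VT ET x y, x) \<in> ET\<^sup>*" and lV: "lca VT ET x y \<in> VT" using is_lcaD[OF il] by blast+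
      have "lca VT ET x y \<noteq> x"
      proof
        assume "lca VT ET x y = x"
        then have "y = x" using lca_leaf_eq[OF ptT _ yV] that(1) unfolding L_def by blast
        then show False using that(3) by simp
      qed
      then have "\<tau>T x < t x y" unfolding t_def by (rule tm_lt[OF tmT lV xV lx])
      then show ?thesis using sx by simp
    qed
    have tp3sS: "tp3s (s x y) (s x z) (s y z) \<or> (t x y \<noteq> s x y \<and> t x z \<noteq> s x z \<and> t y z \<noteq> s y z)"
      if "x \<in> L" "y \<in> L" "z \<in> L" "x \<noteq> y" "x \<noteq> z" "y \<noteq> z" for x y z
    proof (cases "\<sigma> x = \<sigma> y \<and> \<sigma> y = \<sigma> z")
      case True
      then show ?thesis using same[OF that(1,2,4)] same[OF that(1,3,5)] same[OF that(2,3,6)] by simp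
    next
      case False
      have "\<not> (lca VS ES (\<sigma> x) (\<sigma> y) = lca VS ES (\<sigma> x) (\<sigma> z) \<and> lca VS ES (\<sigma> x) (\<sigma> z) = lca VS ES (\<sigma> y) (\<sigma> z))"
        by (rule bin_noteq3'[OF ptS binS LS[OF that(1)] LS[OF that(2)] LS[OF that(3)] False])
      then have "tp3s (s x y) (s x z) (s y z)"
        unfolding s_def by (rule tp3s_gen[OF ptS tmS LSV[OF that(1)] LSV[OF that(2)] LSV[OF that(3)]])
      then show ?thesis by blast
    qed
    show ?thesis unfolding G
    proof (rule cograph_from)
      fix a b c d assume H: "a \<in> L" "b \<in> L" "c \<in> L" "d \<in> L" "distinct [a, b, c, d]"
        "t a b = s a b" "t b c = s b c" "t c d = s c d" "t a c \<noteq> s a c" "t b d \<noteq> s b d" "t a d \<noteq> s a d"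
      have d: "a \<noteq> b" "a \<noteq> c" "a \<noteq> d" "b \<noteq> c" "b \<noteq> d" "c \<noteq> d" using H(5) by auto
      show False
        using eq_case[OF tp3sT[OF H(1,2,3) d(1,2,4)] tp3sT[OF H(1,2,4) d(1,3,5)]
          tp3sT[OF H(1,3,4) d(2,3,6)] tp3sT[OF H(2,3,4) d(4,5,6)]
          tp3sS[OF H(1,2,3) d(1,2,4)] tp3sS[OF H(1,2,4) d(1,3,5)]
          tp3sS[OF H(1,3,4) d(2,3,6)] tp3sS[OF H(2,3,4) d(4,5,6)] H(6-11)] .
    qed
  qed
  show ?thesis using C1 C2 C3 unfolding L_def by blast
qed

end
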